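(* Let $r\ge2$ be an integer and let $\theta\in C_p(\mathbb{R})$ satisfy $\theta(x)=x^2$ for $x\in[0,\frac1r]$, $\theta\in C^2(\mathbb{R})$, and $\theta>0$ on $(0,1)$. Then $\Delta_{n,0}(\tfrac1r;U_\theta)=-\frac{2}{r-1}$ for every $n\in\mathbb{N}_0$. Consequently $U_\theta\notin\mathcal{P}$.
   Context: $C_p(\mathbb{R})$ denotes the set of all continuous functions $f:\mathbb{R}\to\mathbb{R}$ periodic with period $1$ with $f(0)=0$; $\mathbb{N}_0=\mathbb{N}\cup\{0\}$. For $\psi\in C_p(\mathbb{R})$, $U_\psi(x)=\sum_{j=0}^\infty r^{-j}\psi(r^jx)$. For $f\in C_p(\mathbb{R})$ and $(n,k,y)\in\mathbb{N}_0\times\mathbb{Z}\times(0,1)$: $\delta^+_{n,k}(y;f)=\dfrac{f(\frac{k+1}{r^n})-f(\frac{k+y}{r^n})}{\frac{1-y}{r^n}}$, $\delta^-_{n,k}(y;f)=\dfrac{f(\frac{k+y}{r^n})-f(\frac{k}{r^n})}{\frac{y}{r^n}}$, $\Delta_{n,k}(y;f)=2r^n(\delta^+_{n,k}(y;f)-\delta^-_{n,k}(y;f))$. For $c>0$, $\mathcal{P}_c$ is the set of $f\in C_p(\mathbb{R})$ with $\delta^+_{n,k}(y;f)-\delta^-_{n,k}(y;f)\le-c$ for all $(n,k,y)\in\mathbb{N}_0\times\mathbb{Z}\times(0,1)$, and $\mathcal{P}=\bigcup_{c>0}\mathcal{P}_c$. *)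

theory Defs
  imports "HOL-Analysis.Analysis"
begin

definition Cp :: "(real \<Rightarrow> real) set" where
  "Cp = {f. continuous_on UNIV f \<and> (\<forall>x. f (x + 1) = f x) \<and> f 0 = 0}"

definition U :: "nat \<Rightarrow> (real \<Rightarrow> real) \<Rightarrow> real \<Rightarrow> real" where
  "U r \<psi> x = (\<Sum>j. \<psi> (real r ^ j * x) / real r ^ j)"

definition delta_plus :: "nat \<Rightarrow> nat \<Rightarrow> int \<Rightarrow> real \<Rightarrow> (real \<Rightarrow> real) \<Rightarrow> real" where
  "delta_plus r n k y f =
     (f ((real_of_int k + 1) / real r ^ n) - f ((real_of_int k + y) / real r ^ n))
       / ((1 - y) / real r ^ n)"

definition delta_minus :: "nat \<Rightarrow> nat \<Rightarrow> int \<Rightarrow> real \<Rightarrow> (real \<Rightarrow> real) \<Rightarrow> real" where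
  "delta_minus r n k y f =
     (f ((real_of_int k + y) / real r ^ n) - f (real_of_int k / real r ^ n))
       / (y / real r ^ n)"

definition Delta :: "nat \<Rightarrow> nat \<Rightarrow> int \<Rightarrow> real \<Rightarrow> (real \<Rightarrow> real) \<Rightarrow> real" where
  "Delta r n k y f = 2 * real r ^ n * (delta_plus r n k y f - delta_minus r n k y f)"

definition Pc :: "nat \<Rightarrow> real \<Rightarrow> (real \<Rightarrow> real) set" where
  "Pc r c = {f \<in> Cp. \<forall>n k y. 0 < y \<and> y < 1 \<longrightarrow>
                 delta_plus r n k y f - delta_minus r n k y f \<le> - c}"

definition P :: "nat \<Rightarrow> (real \<Rightarrow> real) set" where
  "P r = (\<Union>c\<in>{c. c > 0}. Pc r c)"

end

theory Submission
  imports Defs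
begin

lemma theta_nat:
  assumes "\<theta> \<in> Cp"
  shows "\<theta> (real (m::nat)) = 0"
proof (induction m)
  case 0 then show ?case using assms by (simp add: Cp_def)
next
  case (Suc m)
  have "\<theta> (real m + 1) = \<theta> (real m)" using assms by (simp add: Cp_def)
  then show ?case using Suc by (simp add: add.commute)
qed

lemma U_val:
  fixes r :: nat
  assumes r: "r \<ge> 2" and th: "\<theta> \<in> Cp"
    and sq: "\<forall>x\<in>{0..1 / real r}. \<theta> x = x\<^sup>2"
  shows "U r \<theta> (1 / real r ^ n) = (\<Sum>j<n. real r ^ j / real r ^ (2*n))"
proof -
  have rp: "real r > 0" using r by simp
  have z: "\<theta> (real r ^ j * (1 / real r ^ n)) / real r ^ j = 0" if "j \<notin> {..<n}" for j
  proof -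
    from that have "j \<ge> n" by simp
    then obtain d where d: "j = n + d" using le_Suc_ex by blast
    have "real r ^ j * (1 / real r ^ n) = real (r ^ d)"
      using rp by (simp add: d power_add)
    then show ?thesis using theta_nat[OF th, of "r ^ d"] by (simp del: of_nat_power)
  qed
  have v: "\<theta> (real r ^ j * (1 / real r ^ n)) / real r ^ j = real r ^ j / real r ^ (2*n)"
    if "j \<in> {..<n}" for j
  proof -
    from that have jn: "j < n" by simp
    then obtain d where "n = Suc (j + d)" using less_imp_Suc_add by blast
    then have d: "n = j + Suc d" by simp
    have e: "real r ^ j * (1 / real r ^ n) = 1 / real r ^ Suc d"
      using rp by (simp add: d power_add)
    have "real r ^ 1 \<le> real r ^ Suc d"
      by (rule power_increasing) (use r in auto)
    then have "1 / real r ^ Suc d \<le> 1 / real r"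
      by (intro divide_left_mono) (use rp in auto)
    moreover have "0 \<le> 1 / real r ^ Suc d" using rp by simp
    ultimately have "\<theta> (1 / real r ^ Suc d) = (1 / real r ^ Suc d)\<^sup>2" using sq by auto
    moreover have "real r ^ (2*n) = (real r ^ j)\<^sup>2 * (real r ^ Suc d)\<^sup>2"
      unfolding d by (simp only: power_add power_mult[symmetric] mult.commute[of 2] power_mult_distrib[symmetric]) (simp add: power_mult power2_eq_square mult_ac power_add)
    moreover have "real r ^ j > 0" "real r ^ Suc d > 0" using rp by auto
    ultimately show ?thesis unfolding e
      by (simp add: power2_eq_square field_simps)
  qed
  have "U r \<theta> (1 / real r ^ n) = (\<Sum>j<n. \<theta> (real r ^ j * (1 / real r ^ n)) / real r ^ j)"
    unfolding U_def by (rule suminf_finite) (use z in auto)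
  also have "\<dots> = (\<Sum>j<n. real r ^ j / real r ^ (2*n))"
    by (rule sum.cong) (use v in auto)
  finally show ?thesis .
qed

lemma U_closed:
  fixes r :: nat
  assumes r: "r \<ge> 2" and th: "\<theta> \<in> Cp"
    and sq: "\<forall>x\<in>{0..1 / real r}. \<theta> x = x\<^sup>2"
  shows "U r \<theta> (1 / real r ^ n) = (real r ^ n - 1) / ((real r - 1) * real r ^ (2*n))"
proof -
  have "(\<Sum>j<n. real r ^ j / real r ^ (2*n)) = (\<Sum>j<n. real r ^ j) / real r ^ (2*n)"
    by (simp add: sum_divide_distrib)
  also have "(\<Sum>j<n. real r ^ j) = (real r ^ n - 1) / (real r - 1)"
    using r by (subst geometric_sum) auto
  finally show ?thesis using U_val[OF assms] by simp
qed

lemma U_zero: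
  assumes "\<theta> \<in> Cp" shows "U r \<theta> 0 = 0"
  using assms by (simp add: U_def Cp_def)

lemma diff_val:
  fixes r :: nat
  assumes r: "r \<ge> 2" and th: "\<theta> \<in> Cp"
    and sq: "\<forall>x\<in>{0..1 / real r}. \<theta> x = x\<^sup>2"
  shows "delta_plus r n 0 (1 / real r) (U r \<theta>) - delta_minus r n 0 (1 / real r) (U r \<theta>)
     = - 1 / (real r ^ n * (real r - 1))"
proof -
  have rp: "real r > 1" using r by simp
  define N where "N = real r ^ n"
  have Np: "N > 0" using rp by (simp add: N_def)
  have a: "(1 / real r) / real r ^ n = 1 / real r ^ Suc n" by simp
  have u1: "U r \<theta> (1 / N) = (N - 1) / ((real r - 1) * N^2)"
    using U_closed[OF assms, of n] by (simp add: N_def power_mult power2_eq_square power_mult_distrib[symmetric] mult.commute)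
  have u2: "U r \<theta> (1 / real r ^ Suc n) = (real r * N - 1) / ((real r - 1) * (real r * N)^2)"
    using U_closed[OF assms, of "Suc n"] by (simp add: N_def power_mult power2_eq_square mult_ac)
  have "delta_plus r n 0 (1 / real r) (U r \<theta>) = (U r \<theta> (1 / N) - U r \<theta> (1 / real r ^ Suc n)) / ((1 - 1 / real r) / N)"
    unfolding delta_plus_def by (simp add: N_def)
  moreover have "delta_minus r n 0 (1 / real r) (U r \<theta>) = U r \<theta> (1 / real r ^ Suc n) / ((1 / real r) / N)"
    unfolding delta_minus_def using U_zero[OF th] by (simp add: N_def)
  ultimately have "delta_plus r n 0 (1 / real r) (U r \<theta>) - delta_minus r n 0 (1 / real r) (U r \<theta>)
     = (U r \<theta> (1 / N) - U r \<theta> (1 / real r ^ Suc n)) / ((1 - 1 / real r) / N) - U r \<theta> (1 / real r ^ Suc n) / ((1 / real r) / N)"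
    by simp
  also have "\<dots> = - 1 / (N * (real r - 1))"
  proof -
    define R where "R = real r"
    have R1: "R - 1 > 0" "R > 0" using rp by (auto simp: R_def)
    have t2: "(R * N - 1) / ((R - 1) * (R * N)\<^sup>2) / ((1 / R) / N) = (R * N - 1) / ((R - 1) * R * N)"
      using R1 Np by (simp add: field_simps power2_eq_square)
    have t1: "((N - 1) / ((R - 1) * N\<^sup>2) - (R * N - 1) / ((R - 1) * (R * N)\<^sup>2)) / ((1 - 1 / R) / N)
       = (R*R*N - R*R - R*N + 1) / ((R - 1) * (R - 1) * R * N)"
    proof -
      have a: "(N - 1) / ((R - 1) * N\<^sup>2) - (R * N - 1) / ((R - 1) * (R * N)\<^sup>2)
           = (R*R*N - R*R - R*N + 1) / ((R - 1) * R * R * N * N)"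
      proof -
        have a1: "(N - 1) / ((R - 1) * N\<^sup>2) = (R*R*(N - 1)) / ((R - 1) * R * R * N * N)"
          using R1 Np by (simp add: power2_eq_square)
        have a2: "(R * N - 1) / ((R - 1) * (R * N)\<^sup>2) = (R * N - 1) / ((R - 1) * R * R * N * N)"
          by (simp add: power2_eq_square mult_ac)
        show ?thesis unfolding a1 a2 diff_divide_distrib[symmetric] by (simp add: algebra_simps)
      qed
      have b: "(1 - 1 / R) / N = (R - 1) / (R * N)"
        using R1 Np by (simp add: field_simps)
      show ?thesis unfolding a b using R1 Np by (simp add: divide_simps)
    qed
    have t3: "(R*R*N - R*R - R*N + 1) / ((R - 1) * (R - 1) * R * N) - (R * N - 1) / ((R - 1) * R * N)
       = - 1 / (N * (R - 1))"
    proof -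
      have c1: "(R * N - 1) / ((R - 1) * R * N) = ((R * N - 1) * (R - 1)) / ((R - 1) * (R - 1) * R * N)"
        using R1 Np by simp
      have c2: "R*R*N - R*R - R*N + 1 - (R * N - 1) * (R - 1) = - (R * (R - 1))"
        by (simp add: algebra_simps)
      have c3: "- (R * (R - 1)) / ((R - 1) * (R - 1) * R * N) = - 1 / (N * (R - 1))"
        using R1 Np by (simp add: divide_simps)
      show ?thesis unfolding c1 diff_divide_distrib[symmetric] c2 c3 ..
    qed
    show ?thesis unfolding u1 u2 unfolding R_def[symmetric] t1 t2 by (rule t3)
  qed
  finally show ?thesis by (simp add: N_def)
qed

theorem theorem3p9:
  fixes r :: nat and \<theta> :: "real \<Rightarrow> real"
  assumes "r \<ge> 2"
    and "\<theta> \<in> Cp"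
    and "\<forall>x\<in>{0..1 / real r}. \<theta> x = x\<^sup>2"
    and "\<exists>\<theta>' \<theta>''. (\<forall>x. (\<theta> has_real_derivative \<theta>' x) (at x))
                  \<and> (\<forall>x. (\<theta>' has_real_derivative \<theta>'' x) (at x))
                  \<and> continuous_on UNIV \<theta>''"
    and "\<forall>x\<in>{0<..<1}. \<theta> x > 0"
  shows "(\<forall>n. Delta r n 0 (1 / real r) (U r \<theta>) = - 2 / (real r - 1))
         \<and> U r \<theta> \<notin> P r"
proof
  have rp: "real r > 1" using assms(1) by simp
  show "\<forall>n. Delta r n 0 (1 / real r) (U r \<theta>) = - 2 / (real r - 1)"
  proof
    fix n
    show "Delta r n 0 (1 / real r) (U r \<theta>) = - 2 / (real r - 1)"
      unfolding Delta_def diff_val[OF assms(1-3)] using rp by (simp add: field_simps)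
  qed
  show "U r \<theta> \<notin> P r"
  proof
    assume "U r \<theta> \<in> P r"
    then obtain c where c: "c > 0" "U r \<theta> \<in> Pc r c" by (auto simp: P_def)
    have y: "0 < 1 / real r" "1 / real r < (1::real)" using rp by auto
    have le: "- 1 / (real r ^ n * (real r - 1)) \<le> - c" for n
    proof -
      have "\<forall>n k y. 0 < y \<and> y < 1 \<longrightarrow>
                 delta_plus r n k y (U r \<theta>) - delta_minus r n k y (U r \<theta>) \<le> - c"
        using c(2) unfolding Pc_def by blast
      then have "delta_plus r n 0 (1 / real r) (U r \<theta>) - delta_minus r n 0 (1 / real r) (U r \<theta>) \<le> - c"
        using y by blast
      then show ?thesis using diff_val[OF assms(1-3), of n] by simp
    qed
    obtain n where n: "1 / c < real n" using reals_Archimedean2 by blast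
    have "n < 2 ^ n" by (rule less_exp)
    also have "(2::nat) ^ n \<le> r ^ n" using assms(1) by (simp add: power_mono)
    finally have "real n \<le> real r ^ n" by (metis of_nat_le_iff of_nat_power less_imp_le)
    also have "\<dots> \<le> real r ^ n * (real r - 1)" using rp by simp
    finally have "1 / c < real r ^ n * (real r - 1)" using n by simp
    hence "1 / (real r ^ n * (real r - 1)) < c" using c(1) rp
      by (simp add: field_simps)
    with le[of n] show False by simp
  qed
qed

end
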